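(* In the privacy game with $\varrho\ge 0$, fix $\epsilon>0$ and $(\alpha^0,\beta^0)\in A\times B$, and let $\{(\alpha^k,\beta^k)\}_{k\in\mathbb{N}}$ be generated by the following thresholded best-response dynamics: for $k=1,2,\dots$, if $k$ is even, choose $\alpha'\in\arg\min_{\alpha\in A}U(\alpha,\beta^{k-1})$, set $\alpha^k=\alpha'$ if $U(\alpha^{k-1},\beta^{k-1})-U(\alpha',\beta^{k-1})>\epsilon$ and $\alpha^k=\alpha^{k-1}$ otherwise, and set $\beta^k=\beta^{k-1}$; if $k$ is odd, choose $\beta'\in\arg\min_{\beta\in B}V(\alpha^{k-1},\beta)$, set $\beta^k=\beta'$ if $V(\alpha^{k-1},\beta^{k-1})-V(\alpha^{k-1},\beta')>\epsilon$ and $\beta^k=\beta^{k-1}$ otherwise, and set $\alpha^k=\alpha^{k-1}$. Then $(\alpha^k,\beta^k)\in\mathcal{N}_\epsilon$ for all $k\ge 3+\Psi(\alpha^0,\beta^0)/\epsilon$, where $\Psi(\alpha,\beta)=\xi(\alpha,\beta)+\varrho\zeta(\alpha)$ and $\mathcal{N}_\epsilon=\{(\alpha,\beta)\in A\times B: U(\alpha,\beta)\le U(\alpha',\beta)+\epsilon\ \forall\alpha'\in A,\ V(\alpha,\beta)\le V(\alpha,\beta')+\epsilon\ \forall\beta'\in B\}$.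
   Context: Privacy game. $\mathcal{X},\mathcal{W},\mathcal{Y}$ are finite nonempty sets; $p$ is a joint probability mass function of $(X,Z,W)$ on $\mathcal{X}\times\mathcal{X}\times\mathcal{W}$; $d:\mathcal{X}\times\mathcal{X}\to\mathbb{R}_{\ge 0}$; $\varrho$ is the privacy ratio. Sender policies: $A=\{\alpha=(\alpha_{yzw}):\alpha_{yzw}\in[0,1],\ \sum_{y\in\mathcal{Y}}\alpha_{yzw}=1\ \forall (z,w)\in\mathcal{X}\times\mathcal{W}\}$, with $\alpha_{yzw}=\mathbb{P}\{Y=y\mid Z=z,W=w\}$. Receiver policies: $B=\{\beta=(\beta_{\hat x y}):\beta_{\hat x y}\in[0,1],\ \sum_{\hat x\in\mathcal{X}}\beta_{\hat x y}=1\ \forall y\in\mathcal{Y}\}$, with $\beta_{\hat x y}=\mathbb{P}\{\hat X=\hat x\mid Y=y\}$. Define $\xi(\alpha,\beta)=\sum_{x,\hat x\in\mathcal{X}}\sum_{y\in\mathcal{Y}}\sum_{z\in\mathcal{X}}\sum_{w\in\mathcal{W}}d(x,\hat x)\beta_{\hat x y}\alpha_{yzw}p(x,z,w)$ and $\zeta(\alpha)=\sum_{y,w}P_{yw}\log\frac{P_{yw}}{P_y P_w}$ (with $0\log 0=0$), where $P_{yw}=\sum_{z,x}\alpha_{yzw}p(x,z,w)$, $P_y=\sum_{w}P_{yw}$, $P_w=\sum_{z,x}p(x,z,w)$ (the mutual information $I(Y;W)$). Sender cost $U(\alpha,\beta)=\xi(\alpha,\beta)+\varrho\zeta(\alpha)$;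 receiver cost $V(\alpha,\beta)=\xi(\alpha,\beta)$. *)

theory Defs
  imports Main "HOL-Analysis.Analysis"
begin

text \<open>Privacy game. The finite nonempty sets X, W, Y are the (finite) types
'x, 'w, 'y. p is the joint pmf of (X,Z,W); alpha y z w = P(Y=y | Z=z, W=w);
beta xh y = P(Xhat = xh | Y = y).\<close>

definition pmf3 :: "('x::finite \<Rightarrow> 'x \<Rightarrow> 'w::finite \<Rightarrow> real) \<Rightarrow> bool" where
  "pmf3 p \<longleftrightarrow> (\<forall>x z w. p x z w \<ge> 0) \<and> (\<Sum>x\<in>UNIV. \<Sum>z\<in>UNIV. \<Sum>w\<in>UNIV. p x z w) = 1"

definition senderPolicies :: "('y::finite \<Rightarrow> 'x::finite \<Rightarrow> 'w::finite \<Rightarrow> real) set" where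
  "senderPolicies = {\<alpha>. (\<forall>y z w. 0 \<le> \<alpha> y z w \<and> \<alpha> y z w \<le> 1) \<and>
                        (\<forall>z w. (\<Sum>y\<in>UNIV. \<alpha> y z w) = 1)}"

definition receiverPolicies :: "('x::finite \<Rightarrow> 'y::finite \<Rightarrow> real) set" where
  "receiverPolicies = {\<beta>. (\<forall>xh y. 0 \<le> \<beta> xh y \<and> \<beta> xh y \<le> 1) \<and>
                          (\<forall>y. (\<Sum>xh\<in>UNIV. \<beta> xh y) = 1)}"

definition xi :: "('x::finite \<Rightarrow> 'x \<Rightarrow> 'w::finite \<Rightarrow> real) \<Rightarrow> ('x \<Rightarrow> 'x \<Rightarrow> real)
    \<Rightarrow> ('y::finite \<Rightarrow> 'x \<Rightarrow> 'w \<Rightarrow> real) \<Rightarrow> ('x \<Rightarrow> 'y \<Rightarrow> real) \<Rightarrow> real" where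
  "xi p d \<alpha> \<beta> = (\<Sum>x\<in>UNIV. \<Sum>xh\<in>UNIV. \<Sum>y\<in>UNIV. \<Sum>z\<in>UNIV. \<Sum>w\<in>UNIV.
       d x xh * \<beta> xh y * \<alpha> y z w * p x z w)"

definition Pyw :: "('x::finite \<Rightarrow> 'x \<Rightarrow> 'w::finite \<Rightarrow> real) \<Rightarrow> ('y::finite \<Rightarrow> 'x \<Rightarrow> 'w \<Rightarrow> real)
    \<Rightarrow> 'y \<Rightarrow> 'w \<Rightarrow> real" where
  "Pyw p \<alpha> y w = (\<Sum>z\<in>UNIV. \<Sum>x\<in>UNIV. \<alpha> y z w * p x z w)"

definition Py :: "('x::finite \<Rightarrow> 'x \<Rightarrow> 'w::finite \<Rightarrow> real) \<Rightarrow> ('y::finite \<Rightarrow> 'x \<Rightarrow> 'w \<Rightarrow> real)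
    \<Rightarrow> 'y \<Rightarrow> real" where
  "Py p \<alpha> y = (\<Sum>w\<in>UNIV. Pyw p \<alpha> y w)"

definition Pw :: "('x::finite \<Rightarrow> 'x \<Rightarrow> 'w::finite \<Rightarrow> real) \<Rightarrow> 'w \<Rightarrow> real" where
  "Pw p w = (\<Sum>z\<in>UNIV. \<Sum>x\<in>UNIV. p x z w)"

text \<open>Mutual information I(Y;W) (natural logarithm), with the convention 0 log 0 = 0.\<close>
definition zeta :: "('x::finite \<Rightarrow> 'x \<Rightarrow> 'w::finite \<Rightarrow> real) \<Rightarrow> ('y::finite \<Rightarrow> 'x \<Rightarrow> 'w \<Rightarrow> real) \<Rightarrow> real" where
  "zeta p \<alpha> = (\<Sum>y\<in>UNIV. \<Sum>w\<in>UNIV.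
      (if Pyw p \<alpha> y w = 0 then 0
       else Pyw p \<alpha> y w * ln (Pyw p \<alpha> y w / (Py p \<alpha> y * Pw p w))))"

definition Ucost :: "('x::finite \<Rightarrow> 'x \<Rightarrow> 'w::finite \<Rightarrow> real) \<Rightarrow> ('x \<Rightarrow> 'x \<Rightarrow> real) \<Rightarrow> real
    \<Rightarrow> ('y::finite \<Rightarrow> 'x \<Rightarrow> 'w \<Rightarrow> real) \<Rightarrow> ('x \<Rightarrow> 'y \<Rightarrow> real) \<Rightarrow> real" where
  "Ucost p d \<rho> \<alpha> \<beta> = xi p d \<alpha> \<beta> + \<rho> * zeta p \<alpha>"

definition Vcost :: "('x::finite \<Rightarrow> 'x \<Rightarrow> 'w::finite \<Rightarrow> real) \<Rightarrow> ('x \<Rightarrow> 'x \<Rightarrow> real)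
    \<Rightarrow> ('y::finite \<Rightarrow> 'x \<Rightarrow> 'w \<Rightarrow> real) \<Rightarrow> ('x \<Rightarrow> 'y \<Rightarrow> real) \<Rightarrow> real" where
  "Vcost p d \<alpha> \<beta> = xi p d \<alpha> \<beta>"

definition Psi :: "('x::finite \<Rightarrow> 'x \<Rightarrow> 'w::finite \<Rightarrow> real) \<Rightarrow> ('x \<Rightarrow> 'x \<Rightarrow> real) \<Rightarrow> real
    \<Rightarrow> ('y::finite \<Rightarrow> 'x \<Rightarrow> 'w \<Rightarrow> real) \<Rightarrow> ('x \<Rightarrow> 'y \<Rightarrow> real) \<Rightarrow> real" where
  "Psi p d \<rho> \<alpha> \<beta> = xi p d \<alpha> \<beta> + \<rho> * zeta p \<alpha>"

definition epsNash :: "('x::finite \<Rightarrow> 'x \<Rightarrow> 'w::finite \<Rightarrow> real) \<Rightarrow> ('x \<Rightarrow> 'x \<Rightarrow> real) \<Rightarrow> real \<Rightarrow> real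
    \<Rightarrow> (('y::finite \<Rightarrow> 'x \<Rightarrow> 'w \<Rightarrow> real) \<times> ('x \<Rightarrow> 'y \<Rightarrow> real)) set" where
  "epsNash p d \<rho> \<epsilon> = {(\<alpha>, \<beta>). \<alpha> \<in> senderPolicies \<and> \<beta> \<in> receiverPolicies \<and>
      (\<forall>\<alpha>'\<in>senderPolicies. Ucost p d \<rho> \<alpha> \<beta> \<le> Ucost p d \<rho> \<alpha>' \<beta> + \<epsilon>) \<and>
      (\<forall>\<beta>'\<in>receiverPolicies. Vcost p d \<alpha> \<beta> \<le> Vcost p d \<alpha> \<beta>' + \<epsilon>)}"

end

theory Submission
  imports Defs
begin

lemma sumPw: assumes p: "pmf3 p" shows "(\<Sum>w\<in>UNIV. Pw p w) = 1"
proof -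
  have h: "(\<Sum>x\<in>UNIV. \<Sum>z\<in>UNIV. \<Sum>w\<in>UNIV. p x z w) = 1" using p unfolding pmf3_def by simp
  have "(\<Sum>w\<in>UNIV. \<Sum>z\<in>UNIV. \<Sum>x\<in>UNIV. p x z w) = (\<Sum>w\<in>UNIV. \<Sum>x\<in>UNIV. \<Sum>z\<in>UNIV. p x z w)"
    by (rule sum.cong[OF refl], rule sum.swap)
  also have "\<dots> = (\<Sum>x\<in>UNIV. \<Sum>w\<in>UNIV. \<Sum>z\<in>UNIV. p x z w)" by (rule sum.swap)
  also have "\<dots> = (\<Sum>x\<in>UNIV. \<Sum>z\<in>UNIV. \<Sum>w\<in>UNIV. p x z w)"
    by (rule sum.cong[OF refl], rule sum.swap)
  finally show ?thesis using h unfolding Pw_def by simp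
qed

lemma sumPyw: assumes "\<alpha> \<in> senderPolicies"
  shows "(\<Sum>y\<in>UNIV. \<Sum>w\<in>UNIV. Pyw p \<alpha> y w) = (\<Sum>w\<in>UNIV. Pw p w)"
proof -
  have "(\<Sum>y\<in>UNIV. \<Sum>w\<in>UNIV. Pyw p \<alpha> y w) = (\<Sum>w\<in>UNIV. \<Sum>z\<in>UNIV. \<Sum>x\<in>UNIV. \<Sum>y\<in>UNIV. \<alpha> y z w * p x z w)"
  proof -
    have "(\<Sum>y\<in>UNIV. \<Sum>w\<in>UNIV. Pyw p \<alpha> y w) = (\<Sum>w\<in>UNIV. \<Sum>y\<in>UNIV. Pyw p \<alpha> y w)"
      by (rule sum.swap)
    also have "\<dots> = (\<Sum>w\<in>UNIV. \<Sum>z\<in>UNIV. \<Sum>y\<in>UNIV. \<Sum>x\<in>UNIV. \<alpha> y z w * p x z w)"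
      unfolding Pyw_def by (rule sum.cong[OF refl], rule sum.swap)
    also have "\<dots> = (\<Sum>w\<in>UNIV. \<Sum>z\<in>UNIV. \<Sum>x\<in>UNIV. \<Sum>y\<in>UNIV. \<alpha> y z w * p x z w)"
      by (rule sum.cong[OF refl], rule sum.cong[OF refl], rule sum.swap)
    finally show ?thesis .
  qed
  also have "\<dots> = (\<Sum>w\<in>UNIV. Pw p w)"
    unfolding Pw_def using assms unfolding senderPolicies_def
    by (simp add: sum_distrib_right[symmetric])
  finally show ?thesis .
qed

lemma zeta_nonneg: assumes p: "pmf3 p" and a: "\<alpha> \<in> senderPolicies"
  shows "zeta p \<alpha> \<ge> 0"
proof -
  have pnn: "\<And>x z w. p x z w \<ge> 0" using p unfolding pmf3_def by auto
  have a01: "\<And>y z w. 0 \<le> \<alpha> y z w \<and> \<alpha> y z w \<le> 1" using a unfolding senderPolicies_def by auto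
  have Pnn: "\<And>y w. Pyw p \<alpha> y w \<ge> 0" unfolding Pyw_def using pnn a01
    by (intro sum_nonneg) (simp add: mult_nonneg_nonneg)
  have Py_ge: "\<And>y w. Pyw p \<alpha> y w \<le> Py p \<alpha> y" unfolding Py_def
    using Pnn by (intro member_le_sum) auto
  have Pw_ge: "\<And>y w. Pyw p \<alpha> y w \<le> Pw p w" unfolding Pyw_def Pw_def
    using pnn a01 by (intro sum_mono) (simp add: mult_left_le_one_le)
  have trm: "(if Pyw p \<alpha> y w = 0 then 0
       else Pyw p \<alpha> y w * ln (Pyw p \<alpha> y w / (Py p \<alpha> y * Pw p w))) \<ge> Pyw p \<alpha> y w - Py p \<alpha> y * Pw p w" for y w
  proof (cases "Pyw p \<alpha> y w = 0")
    case True
    have "Py p \<alpha> y * Pw p w \<ge> 0" using Py_ge[of y w] Pw_ge[of y w] Pnn[of y w] by simp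
    then show ?thesis using True by simp
  next
    case False
    define P where "P = Pyw p \<alpha> y w"
    define Q where "Q = Py p \<alpha> y * Pw p w"
    have P0: "P > 0" using False Pnn[of y w] unfolding P_def by simp
    have "Q \<ge> P * P" unfolding Q_def P_def using Py_ge[of y w] Pw_ge[of y w] Pnn[of y w]
      by (simp add: mult_mono)
    hence Q0: "Q > 0" using P0 by (smt (verit) mult_pos_pos)
    have "ln (Q/P) \<le> Q/P - 1" using Q0 P0 by (intro ln_le_minus_one) simp
    hence "P * ln (Q/P) \<le> P * (Q/P - 1)" using P0 by (simp add: mult_left_mono)
    also have "\<dots> = Q - P" using P0 by (simp add: field_simps)
    finally have "P * ln (P/Q) \<ge> P - Q" using P0 Q0 by (simp add: ln_div algebra_simps)
    then show ?thesis using False unfolding P_def Q_def by simp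
  qed
  have A: "zeta p \<alpha> \<ge> (\<Sum>y\<in>UNIV. \<Sum>w\<in>UNIV. Pyw p \<alpha> y w - Py p \<alpha> y * Pw p w)"
    unfolding zeta_def using trm by (intro sum_mono) auto
  have B: "(\<Sum>y\<in>UNIV. \<Sum>w\<in>UNIV. Pyw p \<alpha> y w - Py p \<alpha> y * Pw p w) = (\<Sum>y\<in>UNIV. \<Sum>w\<in>UNIV. Pyw p \<alpha> y w) - (\<Sum>y\<in>UNIV. Py p \<alpha> y) * (\<Sum>w\<in>UNIV. Pw p w)"
    by (simp add: sum_subtractf sum_product)
  have C: "(\<Sum>y\<in>UNIV. \<Sum>w\<in>UNIV. Pyw p \<alpha> y w) - (\<Sum>y\<in>UNIV. Py p \<alpha> y) * (\<Sum>w\<in>UNIV. Pw p w) = 0"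
    using sumPyw[OF a, of p] sumPw[OF p] unfolding Py_def by simp
  show ?thesis using A B C by linarith
qed

lemma xi_nonneg: assumes p: "pmf3 p" and d: "\<forall>x xh. d x xh \<ge> 0" and a: "\<alpha> \<in> senderPolicies"
  and b: "\<beta> \<in> receiverPolicies" shows "xi p d \<alpha> \<beta> \<ge> 0"
  using p d a b unfolding xi_def pmf3_def senderPolicies_def receiverPolicies_def
  by (intro sum_nonneg) (simp add: mult_nonneg_nonneg)
theorem mainTheorem6:
  fixes p :: "'x::finite \<Rightarrow> 'x \<Rightarrow> 'w::finite \<Rightarrow> real"
    and d :: "'x \<Rightarrow> 'x \<Rightarrow> real"
    and \<rho> \<epsilon> :: real
    and as :: "nat \<Rightarrow> ('y::finite \<Rightarrow> 'x \<Rightarrow> 'w \<Rightarrow> real)"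
    and bs :: "nat \<Rightarrow> ('x \<Rightarrow> 'y \<Rightarrow> real)"
  assumes p: "pmf3 p"
    and d: "\<forall>x xh. d x xh \<ge> 0"
    and rho: "\<rho> \<ge> 0"
    and eps: "\<epsilon> > 0"
    and init: "as 0 \<in> senderPolicies" "bs 0 \<in> receiverPolicies"
    and even_step: "\<forall>k. k \<ge> 1 \<and> even k \<longrightarrow>
        (\<exists>\<alpha>'. \<alpha>' \<in> senderPolicies \<and>
              (\<forall>\<alpha>\<in>senderPolicies. Ucost p d \<rho> \<alpha>' (bs (k - 1)) \<le> Ucost p d \<rho> \<alpha> (bs (k - 1))) \<and>
              as k = (if Ucost p d \<rho> (as (k - 1)) (bs (k - 1)) - Ucost p d \<rho> \<alpha>' (bs (k - 1)) > \<epsilon>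
                      then \<alpha>' else as (k - 1)) \<and>
              bs k = bs (k - 1))"
    and odd_step: "\<forall>k. k \<ge> 1 \<and> odd k \<longrightarrow>
        (\<exists>\<beta>'. \<beta>' \<in> receiverPolicies \<and>
              (\<forall>\<beta>\<in>receiverPolicies. Vcost p d (as (k - 1)) \<beta>' \<le> Vcost p d (as (k - 1)) \<beta>) \<and>
              bs k = (if Vcost p d (as (k - 1)) (bs (k - 1)) - Vcost p d (as (k - 1)) \<beta>' > \<epsilon>
                      then \<beta>' else bs (k - 1)) \<and>
              as k = as (k - 1))"
  shows "\<forall>k. real k \<ge> 3 + Psi p d \<rho> (as 0) (bs 0) / \<epsilon> \<longrightarrow> (as k, bs k) \<in> epsNash p d \<rho> \<epsilon>"
  proof -
  let ?S = "senderPolicies :: ('y \<Rightarrow> 'x \<Rightarrow> 'w \<Rightarrow> real) set"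
  let ?R = "receiverPolicies :: ('x \<Rightarrow> 'y \<Rightarrow> real) set"
  let ?U = "Ucost p d \<rho>" and ?V = "Vcost p d"
  define Phi where "Phi j = Psi p d \<rho> (as j) (bs j)" for j
  define E where "E i \<longleftrightarrow> as (Suc i) = as i \<and> bs (Suc i) = bs i" for i
  have PsiU: "Psi p d \<rho> a b = ?U a b" for a b unfolding Psi_def Ucost_def by simp
  have PsiV: "Psi p d \<rho> a b = ?V a b + \<rho> * zeta p a" for a b unfolding Psi_def Vcost_def by simp
  have mem: "as j \<in> ?S \<and> bs j \<in> ?R" for j
  proof (induction j)
    case 0 then show ?case using init by simp
  next
    case (Suc n)
    show ?case
    proof (cases "even (Suc n)")
      case True
      then obtain a' where "a' \<in> ?S" "as (Suc n) = (if ?U (as n) (bs n) - ?U a' (bs n) > \<epsilon> then a' else as n)"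
        "bs (Suc n) = bs n" using even_step[rule_format, of "Suc n"] by auto
      then show ?thesis using Suc by auto
    next
      case False
      then obtain b' where "b' \<in> ?R" "bs (Suc n) = (if ?V (as n) (bs n) - ?V (as n) b' > \<epsilon> then b' else bs n)"
        "as (Suc n) = as n" using odd_step[rule_format, of "Suc n"] by auto
      then show ?thesis using Suc by auto
    qed
  qed
  have Phinn: "Phi j \<ge> 0" for j
    using xi_nonneg[OF p d, of "as j" "bs j"] zeta_nonneg[OF p, of "as j"] mem[of j] rho
    unfolding Phi_def Psi_def by simp
  have stepE: "bs (Suc i) = bs i \<and> ((E i \<and> (\<forall>a\<in>?S. ?U (as i) (bs i) \<le> ?U a (bs i) + \<epsilon>)) \<or>
     (\<not> E i \<and> (\<forall>a\<in>?S. ?U (as (Suc i)) (bs i) \<le> ?U a (bs i)) \<and> (\<exists>a\<in>?S. ?U (as i) (bs i) > ?U a (bs i) + \<epsilon>)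
       \<and> Phi (Suc i) + \<epsilon> < Phi i))" if ev: "even (Suc i)" for i
  proof -
    obtain a' where a': "a' \<in> ?S" "\<forall>a\<in>?S. ?U a' (bs i) \<le> ?U a (bs i)"
      "as (Suc i) = (if ?U (as i) (bs i) - ?U a' (bs i) > \<epsilon> then a' else as i)"
      "bs (Suc i) = bs i" using even_step[rule_format, of "Suc i"] ev by auto
    show ?thesis
    proof (cases "?U (as i) (bs i) - ?U a' (bs i) > \<epsilon>")
      case True
      hence "as (Suc i) = a'" using a' by simp
      moreover have "\<not> E i" using True eps \<open>as (Suc i) = a'\<close> unfolding E_def by auto
      moreover have "Phi (Suc i) + \<epsilon> < Phi i" using True a' \<open>as (Suc i) = a'\<close> unfolding Phi_def PsiU by simp
      ultimately show ?thesis using a' True by force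
    next
      case False
      hence "as (Suc i) = as i" using a' by simp
      hence "E i" using a' unfolding E_def by simp
      moreover have "\<forall>a\<in>?S. ?U (as i) (bs i) \<le> ?U a (bs i) + \<epsilon>" using False a'(2) by force
      ultimately show ?thesis using a' by blast
    qed
  qed
  have stepO: "as (Suc i) = as i \<and> ((E i \<and> (\<forall>b\<in>?R. ?V (as i) (bs i) \<le> ?V (as i) b + \<epsilon>)) \<or>
     (\<not> E i \<and> (\<forall>b\<in>?R. ?V (as i) (bs (Suc i)) \<le> ?V (as i) b) \<and> (\<exists>b\<in>?R. ?V (as i) (bs i) > ?V (as i) b + \<epsilon>)
       \<and> Phi (Suc i) + \<epsilon> < Phi i))" if od: "odd (Suc i)" for i
  proof -
    obtain b' where b': "b' \<in> ?R" "\<forall>b\<in>?R. ?V (as i) b' \<le> ?V (as i) b"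
      "bs (Suc i) = (if ?V (as i) (bs i) - ?V (as i) b' > \<epsilon> then b' else bs i)"
      "as (Suc i) = as i" using odd_step[rule_format, of "Suc i"] od by auto
    show ?thesis
    proof (cases "?V (as i) (bs i) - ?V (as i) b' > \<epsilon>")
      case True
      hence "bs (Suc i) = b'" using b' by simp
      moreover have "\<not> E i" using True eps \<open>bs (Suc i) = b'\<close> unfolding E_def by auto
      moreover have "Phi (Suc i) + \<epsilon> < Phi i" using True b' \<open>bs (Suc i) = b'\<close> unfolding Phi_def PsiV by simp
      ultimately show ?thesis using b' True by force
    next
      case False
      hence "bs (Suc i) = bs i" using b' by simp
      hence "E i" using b' unfolding E_def by simp
      moreover have "\<forall>b\<in>?R. ?V (as i) (bs i) \<le> ?V (as i) b + \<epsilon>" using False b'(2) by force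
      ultimately show ?thesis using b' by blast
    qed
  qed
  have L1: "(as (Suc (Suc i)), bs (Suc (Suc i))) \<in> epsNash p d \<rho> \<epsilon>" if "E i" "E (Suc i)" for i
  proof (cases "even (Suc (Suc i))")
    case True
    hence o: "odd (Suc i)" by simp
    have eqs: "as (Suc (Suc i)) = as i" "bs (Suc (Suc i)) = bs i" "as (Suc i) = as i" "bs (Suc i) = bs i"
      using that unfolding E_def by auto
    have "\<forall>a\<in>?S. ?U (as (Suc i)) (bs (Suc i)) \<le> ?U a (bs (Suc i)) + \<epsilon>" using stepE[OF True] that by blast
    moreover have "\<forall>b\<in>?R. ?V (as i) (bs i) \<le> ?V (as i) b + \<epsilon>" using stepO[OF o] that by blast
    ultimately show ?thesis using mem[of i] unfolding epsNash_def eqs by simp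
  next
    case False
    hence o: "even (Suc i)" by simp
    have eqs: "as (Suc (Suc i)) = as i" "bs (Suc (Suc i)) = bs i" "as (Suc i) = as i" "bs (Suc i) = bs i"
      using that unfolding E_def by auto
    have "\<forall>b\<in>?R. ?V (as (Suc i)) (bs (Suc i)) \<le> ?V (as (Suc i)) b + \<epsilon>" using stepO[OF False] that by blast
    moreover have "\<forall>a\<in>?S. ?U (as i) (bs i) \<le> ?U a (bs i) + \<epsilon>" using stepE[OF o] that by blast
    ultimately show ?thesis using mem[of i] unfolding epsNash_def eqs by simp
  qed
  have L2: "E (Suc (Suc i))" if "E i" "E (Suc i)" for i
  proof (rule ccontr)
    assume n: "\<not> E (Suc (Suc i))"
    have eqs: "as (Suc (Suc i)) = as i" "bs (Suc (Suc i)) = bs i"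
      using that unfolding E_def by auto
    show False
    proof (cases "even (Suc i)")
      case True
      hence t: "even (Suc (Suc (Suc i)))" by simp
      have "\<forall>a\<in>?S. ?U (as i) (bs i) \<le> ?U a (bs i) + \<epsilon>" using stepE[OF True] that by blast
      moreover have "\<exists>a\<in>?S. ?U (as (Suc (Suc i))) (bs (Suc (Suc i))) > ?U a (bs (Suc (Suc i))) + \<epsilon>"
        using stepE[OF t] n by blast
      ultimately show False unfolding eqs by force
    next
      case False
      hence t: "odd (Suc (Suc (Suc i)))" by simp
      have "\<forall>b\<in>?R. ?V (as i) (bs i) \<le> ?V (as i) b + \<epsilon>" using stepO[OF False] that by blast
      moreover have "\<exists>b\<in>?R. ?V (as (Suc (Suc i))) (bs (Suc (Suc i))) > ?V (as (Suc (Suc i))) b + \<epsilon>"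
        using stepO[OF t] n by blast
      ultimately show False unfolding eqs by force
    qed
  qed
  have L3: "E (Suc (Suc i))" if "\<not> E i" "E (Suc i)" for i
  proof (rule ccontr)
    assume n: "\<not> E (Suc (Suc i))"
    have eqs: "as (Suc (Suc i)) = as (Suc i)" "bs (Suc (Suc i)) = bs (Suc i)"
      using that unfolding E_def by auto
    show False
    proof (cases "even (Suc i)")
      case True
      hence t: "even (Suc (Suc (Suc i)))" by simp
      have b: "bs (Suc i) = bs i" using stepE[OF True] by blast
      have "\<forall>a\<in>?S. ?U (as (Suc i)) (bs i) \<le> ?U a (bs i)" using stepE[OF True] that by blast
      moreover have "\<exists>a\<in>?S. ?U (as (Suc (Suc i))) (bs (Suc (Suc i))) > ?U a (bs (Suc (Suc i))) + \<epsilon>"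
        using stepE[OF t] n by blast
      ultimately show False unfolding eqs b using eps by force
    next
      case False
      hence t: "odd (Suc (Suc (Suc i)))" by simp
      have b: "as (Suc i) = as i" using stepO[OF False] by blast
      have "\<forall>b\<in>?R. ?V (as i) (bs (Suc i)) \<le> ?V (as i) b" using stepO[OF False] that by blast
      moreover have "\<exists>b\<in>?R. ?V (as (Suc (Suc i))) (bs (Suc (Suc i))) > ?V (as (Suc (Suc i))) b + \<epsilon>"
        using stepO[OF t] n by blast
      ultimately show False unfolding eqs b using eps by force
    qed
  qed
  have dec: "Phi (Suc i) \<le> Phi i" for i
  proof (cases "E i")
    case True then show ?thesis unfolding E_def Phi_def by simp
  next
    case False then show ?thesis using stepE[of i] stepO[of i] eps by (cases "even (Suc i)") auto
  qed
  have strict: "Phi (Suc i) + \<epsilon> < Phi i" if "\<not> E i" for i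
    using that stepE[of i] stepO[of i] by (cases "even (Suc i)") auto
  have descent: "(\<forall>i'. 1 \<le> i' \<and> i' \<le> n \<longrightarrow> \<not> E i') \<longrightarrow> Phi (Suc n) + real n * \<epsilon> \<le> Phi 1" for n
  proof (induction n)
    case 0 then show ?case by simp
  next
    case (Suc n)
    show ?case
    proof
      assume h: "\<forall>i'. 1 \<le> i' \<and> i' \<le> Suc n \<longrightarrow> \<not> E i'"
      hence "Phi (Suc n) + real n * \<epsilon> \<le> Phi 1" using Suc by auto
      moreover have "Phi (Suc (Suc n)) + \<epsilon> < Phi (Suc n)" using strict h by auto
      ultimately show "Phi (Suc (Suc n)) + real (Suc n) * \<epsilon> \<le> Phi 1" by (simp add: algebra_simps)
    qed
  qed
  show ?thesis
  proof (intro allI impI)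
    fix k
    assume k: "3 + Psi p d \<rho> (as 0) (bs 0) / \<epsilon> \<le> real k"
    have P0: "Phi 0 / \<epsilon> \<ge> 0" using Phinn[of 0] eps by simp
    hence k3: "k \<ge> 3" using k unfolding Phi_def by linarith
    have "\<exists>i. Suc (Suc i) \<le> k \<and> E i \<and> E (Suc i)"
    proof (rule ccontr)
      assume nex: "\<not> ?thesis"
      have "\<forall>i'. 1 \<le> i' \<and> i' \<le> k - 2 \<longrightarrow> \<not> E i'"
      proof (intro allI impI)
        fix i' assume i': "1 \<le> i' \<and> i' \<le> k - 2"
        show "\<not> E i'"
        proof
          assume Ei: "E i'"
          obtain j where j: "i' = Suc j" using i' by (cases i') auto
          show False
          proof (cases "E j")
            case True
            have "Suc (Suc j) \<le> k" using i' j k3 by arith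
            then show False using nex Ei j True by blast
          next
            case False
            hence "E (Suc i')" using L3 Ei j by simp
            moreover have "Suc (Suc i') \<le> k" using i' k3 by arith
            ultimately show False using nex Ei by blast
          qed
        qed
      qed
      hence "Phi (Suc (k - 2)) + real (k - 2) * \<epsilon> \<le> Phi 1" using descent by blast
      moreover have "Phi 1 \<le> Phi 0" using dec[of 0] by simp
      moreover have "Phi (Suc (k-2)) \<ge> 0" by (rule Phinn)
      ultimately have "real (k - 2) * \<epsilon> \<le> Phi 0" by linarith
      hence "real (k - 2) \<le> Phi 0 / \<epsilon>" using eps by (simp add: pos_le_divide_eq)
      moreover have "real (k - 2) = real k - 2" using k3 by simp
      ultimately show False using k unfolding Phi_def by linarith
    qed
    then obtain i0 where i0: "Suc (Suc i0) \<le> k" "E i0" "E (Suc i0)" by blast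
    have all: "E (i0 + n) \<and> E (Suc (i0 + n))" for n
    proof (induction n)
      case 0 then show ?case using i0 by simp
    next
      case (Suc n) then show ?case using L2 by simp
    qed
    obtain n where "k = Suc (Suc (i0 + n))" using i0(1) by (metis le_iff_add add_Suc)
    then show "(as k, bs k) \<in> epsNash p d \<rho> \<epsilon>" using L1 all by simp
  qed
qed

end
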